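(* Let $(H,\mathcal F_\bullet H,\mathcal R)$ be a filtered Rota–Baxter Hopf algebra. Then $\mathcal R(P(H))\subset P(H)$ and $(P(H),\mathcal F_\bullet H\cap P(H),\mathcal R|_{P(H)})$ is a filtered Rota–Baxter Lie algebra, where $P(H)$ is the Lie algebra of primitive elements with the filtration $\mathcal F_nP(H)=\mathcal F_nH\cap P(H)$, $n\ge1$.
   Context: A filtered Hopf algebra is a Hopf algebra $H$ (over a field of characteristic zero) with subspaces $H=\mathcal F_0H\supset\mathcal F_1H\supset\cdots$ such that all Hopf structure maps preserve filtrations (with $\mathcal F_n(V\otimes W)=\sum_{i+j=n}\mathcal F_iV\otimes\mathcal F_jW$, $\mathcal F_0\mathbf k=\mathbf k$, $\mathcal F_n\mathbf k=0$ for $n\ge1$) and $\ker\epsilon=\mathcal F_1H$. A Rota–Baxter Hopf algebra is a cocommutative Hopf algebra $H$ with a coalgebra homomorphism $\mathcal R:H\to H$ with $\mathcal R(h)\mathcal R(t)=\mathcal R\big(h_{(1)}\mathcal R(h_{(2)})\,t\,S(\mathcal R(h_{(3)}))\big)$ for all $h,t\in H$; it is filtered if $H$ is a filtered Hopf algebra and $\mathcal R(\mathcal F_nH)\subset\mathcal F_nH$ for all $n\ge0$. $P(H)=\{x:\Delta(x)=x\otimes1+1\otimes x\}$ with the commutator bracket. A filtered Rota–Baxter Lie algebra is a Lie algebra $\mathfrak g$ with subspaces $\mathfrak g=\mathcal F_1\mathfrak g\supset\mathcal F_2\mathfrak g\supset\cdots$, $[\mathcal F_n\mathfrak g,\mathcal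 F_m\mathfrak g]\subset\mathcal F_{n+m}\mathfrak g$, together with a linear map $R$ satisfying $[R(x),R(y)]=R([R(x),y]+[x,R(y)]+[x,y])$ and $R(\mathcal F_n\mathfrak g)\subset\mathcal F_n\mathfrak g$. *)

theory Defs
  imports Main "HOL.Vector_Spaces"
begin

text \<open>
  A vector space over 'k is a type 'h (additive group) with a scalar
  multiplication s :: 'k => 'h => 'h satisfying vector_space s.
  A 'k-algebra is moreover a ring_1 whose multiplication is 'k-bilinear;
  the unit map is c |-> s c 1.

  Since the field is a parameter (not a type class), the
  tensor powers of H are modelled concretely inside the dual picture:
  an element of H (x) H is represented by the (bi)linear functional it induces
  on pairs of linear functionals (f, g) on H, i.e. a (x) b is
  (f, g) |-> f a * g b (and 0 on non-linear arguments).  Over a field this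
  is injective, so this is (isomorphic to) the tensor product; H (x) H is the
  set of finite sums of pure tensors.
\<close>

definition lfun :: "('k::field \<Rightarrow> 'h::ab_group_add \<Rightarrow> 'h) \<Rightarrow> ('h \<Rightarrow> 'k) \<Rightarrow> bool" where
  "lfun s f \<longleftrightarrow> Vector_Spaces.linear s (*) f"

type_synonym ('k, 'h) tensor2 = "('h \<Rightarrow> 'k) \<Rightarrow> ('h \<Rightarrow> 'k) \<Rightarrow> 'k"
type_synonym ('k, 'h) tensor3 = "('h \<Rightarrow> 'k) \<Rightarrow> ('h \<Rightarrow> 'k) \<Rightarrow> ('h \<Rightarrow> 'k) \<Rightarrow> 'k"

definition tens2 :: "('k::field \<Rightarrow> 'h::ab_group_add \<Rightarrow> 'h) \<Rightarrow> 'h \<Rightarrow> 'h \<Rightarrow> ('k, 'h) tensor2" where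
  "tens2 s a b = (\<lambda>f g. if lfun s f \<and> lfun s g then f a * g b else 0)"

definition tens3 :: "('k::field \<Rightarrow> 'h::ab_group_add \<Rightarrow> 'h) \<Rightarrow> 'h \<Rightarrow> 'h \<Rightarrow> 'h \<Rightarrow> ('k, 'h) tensor3" where
  "tens3 s a b c = (\<lambda>f g h. if lfun s f \<and> lfun s g \<and> lfun s h then f a * g b * h c else 0)"

definition tsum2 :: "('k::field \<Rightarrow> 'h::ab_group_add \<Rightarrow> 'h) \<Rightarrow> nat \<Rightarrow> (nat \<Rightarrow> 'h) \<Rightarrow> (nat \<Rightarrow> 'h) \<Rightarrow> ('k, 'h) tensor2" where
  "tsum2 s n a b = (\<lambda>f g. \<Sum>i<n. tens2 s (a i) (b i) f g)"

definition tsum3 :: "('k::field \<Rightarrow> 'h::ab_group_add \<Rightarrow> 'h) \<Rightarrow> nat \<Rightarrow> (nat \<Rightarrow> 'h) \<Rightarrow> (nat \<Rightarrow> 'h) \<Rightarrow> (nat \<Rightarrow> 'h) \<Rightarrow> ('k, 'h) tensor3" where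
  "tsum3 s n a b c = (\<lambda>f g h. \<Sum>i<n. tens3 s (a i) (b i) (c i) f g h)"

definition tensor2_space :: "('k::field \<Rightarrow> 'h::ab_group_add \<Rightarrow> 'h) \<Rightarrow> ('k, 'h) tensor2 set" where
  "tensor2_space s = {tsum2 s n a b | n a b. True}"

definition ttimes21 :: "('k::field \<Rightarrow> 'h::ab_group_add \<Rightarrow> 'h) \<Rightarrow> ('k, 'h) tensor2 \<Rightarrow> 'h \<Rightarrow> ('k, 'h) tensor3" where
  "ttimes21 s T b = (\<lambda>f g h. if lfun s h then T f g * h b else 0)"

definition ttimes12 :: "('k::field \<Rightarrow> 'h::ab_group_add \<Rightarrow> 'h) \<Rightarrow> 'h \<Rightarrow> ('k, 'h) tensor2 \<Rightarrow> ('k, 'h) tensor3" where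
  "ttimes12 s a T = (\<lambda>f g h. if lfun s f then f a * T g h else 0)"

definition kalgebra :: "('k::field \<Rightarrow> 'h::ring_1 \<Rightarrow> 'h) \<Rightarrow> bool" where
  "kalgebra s \<longleftrightarrow> vector_space s \<and>
     (\<forall>c x y. s c (x * y) = s c x * y \<and> s c (x * y) = x * s c y)"

text \<open>Hopf algebra (H, *, 1, Delta, eps, S) over k, written with Sweedler-type
  finite representations  Delta x = sum_i a_i (x) b_i.\<close>
definition hopf_algebra :: "('k::field \<Rightarrow> 'h::ring_1 \<Rightarrow> 'h) \<Rightarrow> ('h \<Rightarrow> ('k, 'h) tensor2) \<Rightarrow>
    ('h \<Rightarrow> 'k) \<Rightarrow> ('h \<Rightarrow> 'h) \<Rightarrow> bool" where
  "hopf_algebra s \<Delta> \<epsilon> S \<longleftrightarrow>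
     kalgebra s \<and>
     \<comment> \<open>Delta is a linear map H -> H (x) H\<close>
     (\<forall>x. \<Delta> x \<in> tensor2_space s) \<and>
     (\<forall>x y. \<Delta> (x + y) = (\<lambda>f g. \<Delta> x f g + \<Delta> y f g)) \<and>
     (\<forall>c x. \<Delta> (s c x) = (\<lambda>f g. c * \<Delta> x f g)) \<and>
     \<comment> \<open>eps and S are linear\<close>
     Vector_Spaces.linear s (*) \<epsilon> \<and>
     Vector_Spaces.linear s s S \<and>
     \<comment> \<open>coassociativity  (Delta (x) id) Delta = (id (x) Delta) Delta\<close>
     (\<forall>x n a b. \<Delta> x = tsum2 s n a b \<longrightarrow>
        (\<lambda>f g h. \<Sum>i<n. ttimes21 s (\<Delta> (a i)) (b i) f g h) =
        (\<lambda>f g h. \<Sum>i<n. ttimes12 s (a i) (\<Delta> (b i)) f g h)) \<and>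
     \<comment> \<open>counit\<close>
     (\<forall>x n a b. \<Delta> x = tsum2 s n a b \<longrightarrow>
        (\<Sum>i<n. s (\<epsilon> (a i)) (b i)) = x \<and> (\<Sum>i<n. s (\<epsilon> (b i)) (a i)) = x) \<and>
     \<comment> \<open>Delta and eps are algebra maps\<close>
     \<Delta> 1 = tens2 s 1 1 \<and>
     (\<forall>x y n a b m c d. \<Delta> x = tsum2 s n a b \<longrightarrow> \<Delta> y = tsum2 s m c d \<longrightarrow>
        \<Delta> (x * y) = (\<lambda>f g. \<Sum>i<n. \<Sum>j<m. tens2 s (a i * c j) (b i * d j) f g)) \<and>
     \<epsilon> 1 = 1 \<and> (\<forall>x y. \<epsilon> (x * y) = \<epsilon> x * \<epsilon> y) \<and>
     \<comment> \<open>antipode: m (S (x) id) Delta = eta eps = m (id (x) S) Delta\<close>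
     (\<forall>x n a b. \<Delta> x = tsum2 s n a b \<longrightarrow>
        (\<Sum>i<n. S (a i) * b i) = s (\<epsilon> x) 1 \<and> (\<Sum>i<n. a i * S (b i)) = s (\<epsilon> x) 1)"

definition cocommutative :: "('k::field \<Rightarrow> 'h::ring_1 \<Rightarrow> 'h) \<Rightarrow> ('h \<Rightarrow> ('k, 'h) tensor2) \<Rightarrow> bool" where
  "cocommutative s \<Delta> \<longleftrightarrow> (\<forall>x n a b. \<Delta> x = tsum2 s n a b \<longrightarrow> tsum2 s n b a = \<Delta> x)"

definition filt2 :: "('k::field \<Rightarrow> 'h::ab_group_add \<Rightarrow> 'h) \<Rightarrow> (nat \<Rightarrow> 'h set) \<Rightarrow> nat \<Rightarrow> ('k, 'h) tensor2 set" where
  "filt2 s F n = {tsum2 s m a b | m a b. \<forall>i<m. \<exists>p q. p + q = n \<and> a i \<in> F p \<and> b i \<in> F q}"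

text \<open>Preservation of the filtration by the
  multiplication H (x) H -> H is written out as F_i F_j in F_(i+j); by the unit
  it is automatic; by eps : H -> k (F_0 k = k, F_n k = 0 for n >= 1) it says
  eps(F_n H) = 0 for n >= 1.\<close>
definition filtered_hopf_algebra :: "('k::field \<Rightarrow> 'h::ring_1 \<Rightarrow> 'h) \<Rightarrow> ('h \<Rightarrow> ('k, 'h) tensor2) \<Rightarrow>
    ('h \<Rightarrow> 'k) \<Rightarrow> ('h \<Rightarrow> 'h) \<Rightarrow> (nat \<Rightarrow> 'h set) \<Rightarrow> bool" where
  "filtered_hopf_algebra s \<Delta> \<epsilon> S F \<longleftrightarrow>
     hopf_algebra s \<Delta> \<epsilon> S \<and>
     (\<forall>n. module.subspace s (F n)) \<and>
     F 0 = UNIV \<and> (\<forall>n. F (Suc n) \<subseteq> F n) \<and>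
     (\<forall>i j x y. x \<in> F i \<longrightarrow> y \<in> F j \<longrightarrow> x * y \<in> F (i + j)) \<and>
     (\<forall>n x. x \<in> F n \<longrightarrow> \<Delta> x \<in> filt2 s F n) \<and>
     (\<forall>n x. n \<ge> 1 \<longrightarrow> x \<in> F n \<longrightarrow> \<epsilon> x = 0) \<and>
     (\<forall>n x. x \<in> F n \<longrightarrow> S x \<in> F n) \<and>
     {x. \<epsilon> x = 0} = F 1"

text \<open>Rota-Baxter Hopf algebra (cocommutative H, coalgebra homomorphism R with
  R(h) R(t) = R(h_(1) R(h_(2)) t S(R(h_(3)))) ).  Here
  h_(1) (x) h_(2) (x) h_(3) = (Delta (x) id) Delta h, and the linear map
  a (x) b (x) c |-> a R(b) t S(R(c)) is evaluated on any representation.\<close>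
definition rota_baxter_hopf_algebra :: "('k::field \<Rightarrow> 'h::ring_1 \<Rightarrow> 'h) \<Rightarrow> ('h \<Rightarrow> ('k, 'h) tensor2) \<Rightarrow>
    ('h \<Rightarrow> 'k) \<Rightarrow> ('h \<Rightarrow> 'h) \<Rightarrow> ('h \<Rightarrow> 'h) \<Rightarrow> bool" where
  "rota_baxter_hopf_algebra s \<Delta> \<epsilon> S R \<longleftrightarrow>
     hopf_algebra s \<Delta> \<epsilon> S \<and> cocommutative s \<Delta> \<and>
     \<comment> \<open>R is a coalgebra homomorphism\<close>
     Vector_Spaces.linear s s R \<and>
     (\<forall>x n a b. \<Delta> x = tsum2 s n a b \<longrightarrow> \<Delta> (R x) = tsum2 s n (\<lambda>i. R (a i)) (\<lambda>i. R (b i))) \<and>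
     (\<forall>x. \<epsilon> (R x) = \<epsilon> x) \<and>
     \<comment> \<open>Rota-Baxter identity\<close>
     (\<forall>h t n a b m p q r. \<Delta> h = tsum2 s n a b \<longrightarrow>
        (\<lambda>f g k. \<Sum>i<n. ttimes21 s (\<Delta> (a i)) (b i) f g k) = tsum3 s m p q r \<longrightarrow>
        R h * R t = R (\<Sum>j<m. p j * R (q j) * t * S (R (r j))))"

definition filtered_rota_baxter_hopf_algebra :: "('k::field \<Rightarrow> 'h::ring_1 \<Rightarrow> 'h) \<Rightarrow> ('h \<Rightarrow> ('k, 'h) tensor2) \<Rightarrow>
    ('h \<Rightarrow> 'k) \<Rightarrow> ('h \<Rightarrow> 'h) \<Rightarrow> (nat \<Rightarrow> 'h set) \<Rightarrow> ('h \<Rightarrow> 'h) \<Rightarrow> bool" where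
  "filtered_rota_baxter_hopf_algebra s \<Delta> \<epsilon> S F R \<longleftrightarrow>
     rota_baxter_hopf_algebra s \<Delta> \<epsilon> S R \<and> filtered_hopf_algebra s \<Delta> \<epsilon> S F \<and>
     (\<forall>n x. x \<in> F n \<longrightarrow> R x \<in> F n)"

definition primitives :: "('k::field \<Rightarrow> 'h::ring_1 \<Rightarrow> 'h) \<Rightarrow> ('h \<Rightarrow> ('k, 'h) tensor2) \<Rightarrow> 'h set" where
  "primitives s \<Delta> = {x. \<Delta> x = (\<lambda>f g. tens2 s x 1 f g + tens2 s 1 x f g)}"

definition lie_algebra :: "('k::field \<Rightarrow> 'v::ab_group_add \<Rightarrow> 'v) \<Rightarrow> 'v set \<Rightarrow> ('v \<Rightarrow> 'v \<Rightarrow> 'v) \<Rightarrow> bool" where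
  "lie_algebra s g br \<longleftrightarrow>
     vector_space s \<and> module.subspace s g \<and>
     (\<forall>x\<in>g. \<forall>y\<in>g. br x y \<in> g) \<and>
     (\<forall>x\<in>g. \<forall>y\<in>g. \<forall>z\<in>g. br (x + y) z = br x z + br y z \<and> br z (x + y) = br z x + br z y) \<and>
     (\<forall>c. \<forall>x\<in>g. \<forall>y\<in>g. br (s c x) y = s c (br x y) \<and> br x (s c y) = s c (br x y)) \<and>
     (\<forall>x\<in>g. br x x = 0) \<and>
     (\<forall>x\<in>g. \<forall>y\<in>g. \<forall>z\<in>g. br x (br y z) + br y (br z x) + br z (br x y) = 0)"

definition filtered_rb_lie_algebra :: "('k::field \<Rightarrow> 'v::ab_group_add \<Rightarrow> 'v) \<Rightarrow> 'v set \<Rightarrow>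
    ('v \<Rightarrow> 'v \<Rightarrow> 'v) \<Rightarrow> (nat \<Rightarrow> 'v set) \<Rightarrow> ('v \<Rightarrow> 'v) \<Rightarrow> bool" where
  "filtered_rb_lie_algebra s g br Fg R \<longleftrightarrow>
     lie_algebra s g br \<and>
     (\<forall>n\<ge>1. module.subspace s (Fg n) \<and> Fg n \<subseteq> g) \<and>
     Fg 1 = g \<and> (\<forall>n\<ge>1. Fg (Suc n) \<subseteq> Fg n) \<and>
     (\<forall>n\<ge>1. \<forall>m\<ge>1. \<forall>x\<in>Fg n. \<forall>y\<in>Fg m. br x y \<in> Fg (n + m)) \<and>
     (\<forall>x\<in>g. R x \<in> g) \<and>
     (\<forall>x\<in>g. \<forall>y\<in>g. R (x + y) = R x + R y) \<and>
     (\<forall>c. \<forall>x\<in>g. R (s c x) = s c (R x)) \<and>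
     (\<forall>x\<in>g. \<forall>y\<in>g. br (R x) (R y) = R (br (R x) y + br x (R y) + br x y)) \<and>
     (\<forall>n\<ge>1. \<forall>x\<in>Fg n. R x \<in> Fg n)"

end

theory Submission
  imports Defs
begin

lemma additive_diff:
  fixes f :: "'a::ab_group_add \<Rightarrow> 'b::ab_group_add"
  assumes "\<And>x y. f (x + y) = f x + f y"
  shows "f (x - y) = f x - f y"
proof -
  have "f x = f ((x - y) + y)" by simp
  also have "\<dots> = f (x - y) + f y" by (rule assms)
  finally show ?thesis by (simp add: algebra_simps)
qed

lemma lfun_add: "lfun s f \<Longrightarrow> f (x + y) = f x + f y"
  unfolding lfun_def linear_iff by blast

lemma lfun_scale: "lfun s f \<Longrightarrow> f (s c x) = c * f x"
  unfolding lfun_def linear_iff by blast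

lemma lfun_diff: "lfun s f \<Longrightarrow> f (x - y) = f x - f y"
  by (rule additive_diff) (erule lfun_add)

lemma lfun_zero: "lfun s f \<Longrightarrow> f 0 = 0"
  using lfun_diff[of s f 0 0] by simp

definition pa :: "'h::ring_1 \<Rightarrow> nat \<Rightarrow> 'h" where "pa x = (\<lambda>i. if i = 0 then x else 1)"
definition pb :: "'h::ring_1 \<Rightarrow> nat \<Rightarrow> 'h" where "pb x = (\<lambda>i. if i = 0 then 1 else x)"

lemma sum2: "(\<Sum>i<2. g i) = g 0 + g (1::nat)"
  by (simp add: numeral_2_eq_2)
lemma sum3: "(\<Sum>i<3. g i) = g 0 + g (1::nat) + g 2"
  by (simp add: numeral_3_eq_3 numeral_2_eq_2)

locale hopfL =
  fixes s :: "'k::field_char_0 \<Rightarrow> 'h::ring_1 \<Rightarrow> 'h"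
    and \<Delta> :: "'h \<Rightarrow> ('k, 'h) tensor2"
    and \<epsilon> :: "'h \<Rightarrow> 'k"
    and S :: "'h \<Rightarrow> 'h"
  assumes H: "hopf_algebra s \<Delta> \<epsilon> S"
begin

lemma K: "vector_space s \<and> (\<forall>c x y. s c (x * y) = s c x * y \<and> s c (x * y) = x * s c y)"
  using H unfolding hopf_algebra_def kalgebra_def by (elim conjE) (intro conjI; assumption)
lemma vs: "vector_space s" using K by blast
lemma ms: "module s" using vs module_iff_vector_space by blast
lemma smult1: "s c (x * y) = s c x * y" using K by blast
lemma smult2: "s c (x * y) = x * s c y" using K by blast
lemma D_add0: "\<forall>x y. \<Delta> (x + y) = (\<lambda>f g. \<Delta> x f g + \<Delta> y f g)"
  using H unfolding hopf_algebra_def by (elim conjE) assumption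
lemma D_add: "\<Delta> (x + y) = (\<lambda>f g. \<Delta> x f g + \<Delta> y f g)" using D_add0 by blast
lemma D_scale0: "\<forall>c x. \<Delta> (s c x) = (\<lambda>f g. c * \<Delta> x f g)"
  using H unfolding hopf_algebra_def by (elim conjE) assumption
lemma D_scale: "\<Delta> (s c x) = (\<lambda>f g. c * \<Delta> x f g)" using D_scale0 by blast
lemma eps_lin: "Vector_Spaces.linear s (*) \<epsilon>"
  using H unfolding hopf_algebra_def by (elim conjE) assumption
lemma counit0: "\<forall>x n a b. \<Delta> x = tsum2 s n a b \<longrightarrow> (\<Sum>i<n. s (\<epsilon> (a i)) (b i)) = x \<and> (\<Sum>i<n. s (\<epsilon> (b i)) (a i)) = x"
  using H unfolding hopf_algebra_def by (elim conjE) assumption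
lemma counit: "\<Delta> x = tsum2 s n a b \<Longrightarrow> (\<Sum>i<n. s (\<epsilon> (a i)) (b i)) = x \<and> (\<Sum>i<n. s (\<epsilon> (b i)) (a i)) = x"
  using counit0 by blast
lemma D_one: "\<Delta> 1 = tens2 s 1 1"
  using H unfolding hopf_algebra_def by (elim conjE) assumption
lemma D_mult0: "\<forall>x y n a b m c d. \<Delta> x = tsum2 s n a b \<longrightarrow> \<Delta> y = tsum2 s m c d \<longrightarrow>
        \<Delta> (x * y) = (\<lambda>f g. \<Sum>i<n. \<Sum>j<m. tens2 s (a i * c j) (b i * d j) f g)"
  using H unfolding hopf_algebra_def by (elim conjE) assumption
lemma D_mult: "\<Delta> x = tsum2 s n a b \<Longrightarrow> \<Delta> y = tsum2 s m c d \<Longrightarrow>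
        \<Delta> (x * y) = (\<lambda>f g. \<Sum>i<n. \<Sum>j<m. tens2 s (a i * c j) (b i * d j) f g)"
  using D_mult0 by blast
lemma eps_one: "\<epsilon> 1 = 1"
  using H unfolding hopf_algebra_def by (elim conjE) assumption
lemma antipode0: "\<forall>x n a b. \<Delta> x = tsum2 s n a b \<longrightarrow>
        (\<Sum>i<n. S (a i) * b i) = s (\<epsilon> x) 1 \<and> (\<Sum>i<n. a i * S (b i)) = s (\<epsilon> x) 1"
  using H unfolding hopf_algebra_def by (elim conjE) assumption
lemma antipode: "\<Delta> x = tsum2 s n a b \<Longrightarrow>
        (\<Sum>i<n. S (a i) * b i) = s (\<epsilon> x) 1 \<and> (\<Sum>i<n. a i * S (b i)) = s (\<epsilon> x) 1"
  using antipode0 by blast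

lemma eps_add: "\<epsilon> (x + y) = \<epsilon> x + \<epsilon> y" using eps_lin unfolding linear_iff by blast
lemma eps_scale: "\<epsilon> (s c x) = c * \<epsilon> x" using eps_lin unfolding linear_iff by blast

lemma D_diff: "\<Delta> (x - y) f g = \<Delta> x f g - \<Delta> y f g"
proof -
  have "\<Delta> x f g = \<Delta> ((x - y) + y) f g" by simp
  also have "\<dots> = \<Delta> (x - y) f g + \<Delta> y f g" unfolding D_add by (rule refl)
  finally show ?thesis by simp
qed

lemma D_zero: "\<Delta> 0 f g = 0"
  using D_diff[of 0 0] by simp

lemma scale_one: "s 1 x = x" using vs unfolding vector_space_def by blast
lemma scale_zero: "s 0 x = 0"
  using ms by (rule module.scale_zero_left)

lemma prim_iff: "x \<in> primitives s \<Delta> \<longleftrightarrow> \<Delta> x = tsum2 s 2 (pa x) (pb x)"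
  unfolding primitives_def tsum2_def pa_def pb_def by (simp add: sum2)

lemma one_rep: "\<Delta> 1 = tsum2 s 1 (\<lambda>_. 1) (\<lambda>_. 1)"
  unfolding D_one tsum2_def by simp

lemma eps_prim: assumes "x \<in> primitives s \<Delta>" shows "\<epsilon> x = 0"
proof -
  have "(\<Sum>i<2. s (\<epsilon> (pb x i)) (pa x i)) = x"
    using counit[of x 2 "pa x" "pb x"] assms prim_iff by blast
  hence "s (\<epsilon> 1) x + s (\<epsilon> x) 1 = x" by (simp add: sum2 pa_def pb_def)
  hence "\<epsilon> (s (\<epsilon> 1) x + s (\<epsilon> x) 1) = \<epsilon> x" by simp
  hence "\<epsilon> x + \<epsilon> x = \<epsilon> x" by (simp add: eps_add eps_scale eps_one)
  thus ?thesis by simp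
qed

lemma S_one: "S 1 = 1"
  using antipode[OF one_rep] by (simp add: eps_one scale_one)

lemma S_prim: assumes "x \<in> primitives s \<Delta>" shows "S x = - x"
proof -
  have "(\<Sum>i<2. S (pa x i) * pb x i) = s (\<epsilon> x) 1"
    using antipode[of x 2 "pa x" "pb x"] assms prim_iff by blast
  hence "S x + x = 0" by (simp add: sum2 pa_def pb_def S_one eps_prim[OF assms] scale_zero)
  thus ?thesis by (simp add: eq_neg_iff_add_eq_0)
qed

lemma tens2_eq: "tens2 s a b f g = (if lfun s f \<and> lfun s g then f a * g b else 0)"
  by (simp add: tens2_def)

lemma prim_subspace: "module.subspace s (primitives s \<Delta>)"
  unfolding module.subspace_def[OF ms]
proof (intro conjI ballI allI)
  show "0 \<in> primitives s \<Delta>"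
    unfolding primitives_def by (auto simp: D_zero tens2_eq lfun_zero intro!: ext)
next
  fix x y assume x: "x \<in> primitives s \<Delta>" and y: "y \<in> primitives s \<Delta>"
  show "x + y \<in> primitives s \<Delta>"
    using x y unfolding primitives_def
    by (auto simp: D_add tens2_eq lfun_add algebra_simps intro!: ext)
next
  fix c x assume x: "x \<in> primitives s \<Delta>"
  show "s c x \<in> primitives s \<Delta>"
    using x unfolding primitives_def
    by (auto simp: D_scale tens2_eq lfun_scale algebra_simps intro!: ext)
qed

lemma prim_bracket:
  assumes x: "x \<in> primitives s \<Delta>" and y: "y \<in> primitives s \<Delta>"
  shows "x * y - y * x \<in> primitives s \<Delta>"
proof -
  have dx: "\<Delta> x = tsum2 s 2 (pa x) (pb x)" and dy: "\<Delta> y = tsum2 s 2 (pa y) (pb y)"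
    using x y prim_iff by auto
  have m1: "\<Delta> (x * y) = (\<lambda>f g. \<Sum>i<2. \<Sum>j<2. tens2 s (pa x i * pa y j) (pb x i * pb y j) f g)"
    by (rule D_mult[OF dx dy])
  have m2: "\<Delta> (y * x) = (\<lambda>f g. \<Sum>i<2. \<Sum>j<2. tens2 s (pa y i * pa x j) (pb y i * pb x j) f g)"
    by (rule D_mult[OF dy dx])
  show ?thesis unfolding primitives_def
  proof (intro CollectI ext)
    fix f g
    show "\<Delta> (x * y - y * x) f g = tens2 s (x * y - y * x) 1 f g + tens2 s 1 (x * y - y * x) f g"
      unfolding D_diff m1 m2
      by (cases "lfun s f \<and> lfun s g") (auto simp add: sum2 pa_def pb_def tens2_eq lfun_diff algebra_simps)
  qed
qed

end

locale rbL = hopfL +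
  fixes R :: "'h::ring_1 \<Rightarrow> 'h"
  assumes RB: "rota_baxter_hopf_algebra s \<Delta> \<epsilon> S R"
begin

lemma R_lin: "Vector_Spaces.linear s s R"
  using RB unfolding rota_baxter_hopf_algebra_def by (elim conjE) assumption
lemma R_add: "R (x + y) = R x + R y" using R_lin unfolding linear_iff by blast
lemma R_scale: "R (s c x) = s c (R x)" using R_lin unfolding linear_iff by blast
lemma R_diff: "R (x - y) = R x - R y" by (rule additive_diff) (rule R_add)
lemma R_coalg0: "\<forall>x n a b. \<Delta> x = tsum2 s n a b \<longrightarrow> \<Delta> (R x) = tsum2 s n (\<lambda>i. R (a i)) (\<lambda>i. R (b i))"
  using RB unfolding rota_baxter_hopf_algebra_def by (elim conjE) assumption
lemma R_coalg: "\<Delta> x = tsum2 s n a b \<Longrightarrow> \<Delta> (R x) = tsum2 s n (\<lambda>i. R (a i)) (\<lambda>i. R (b i))"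
  using R_coalg0 by blast
lemma eps_R0: "\<forall>x. \<epsilon> (R x) = \<epsilon> x"
  using RB unfolding rota_baxter_hopf_algebra_def by (elim conjE) assumption
lemma eps_R: "\<epsilon> (R x) = \<epsilon> x" using eps_R0 by blast
lemma RB_id0: "\<forall>h t n a b m p q r. \<Delta> h = tsum2 s n a b \<longrightarrow>
        (\<lambda>f g k. \<Sum>i<n. ttimes21 s (\<Delta> (a i)) (b i) f g k) = tsum3 s m p q r \<longrightarrow>
        R h * R t = R (\<Sum>j<m. p j * R (q j) * t * S (R (r j)))"
  using RB unfolding rota_baxter_hopf_algebra_def by (elim conjE) assumption
lemma RB_id: "\<Delta> h = tsum2 s n a b \<Longrightarrow>
        (\<lambda>f g k. \<Sum>i<n. ttimes21 s (\<Delta> (a i)) (b i) f g k) = tsum3 s m p q r \<Longrightarrow>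
        R h * R t = R (\<Sum>j<m. p j * R (q j) * t * S (R (r j)))"
  using RB_id0 by blast

lemma R_one: "R 1 = 1"
proof -
  have dR: "\<Delta> (R 1) = tsum2 s 1 (\<lambda>_. R 1) (\<lambda>_. R 1)"
    using R_coalg[OF one_rep] by simp
  have a1: "S (R 1) * R 1 = 1" and a2: "R 1 * S (R 1) = 1"
    using antipode[OF dR] by (simp_all add: eps_R eps_one scale_one)
  have t3: "(\<lambda>f g k. \<Sum>i<(1::nat). ttimes21 s (\<Delta> ((\<lambda>_. 1) i)) ((\<lambda>_. (1::'h)) i) f g k)
      = tsum3 s 1 (\<lambda>_. 1) (\<lambda>_. 1) (\<lambda>_. 1)"
    by (auto simp: ttimes21_def tsum3_def tens3_def D_one tens2_eq One_nat_def card_lessThan intro!: ext)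
  have "R 1 * R 1 = R (\<Sum>j<(1::nat). 1 * R 1 * 1 * S (R 1))"
    by (rule RB_id[OF one_rep t3])
  hence e: "R 1 * R 1 = R 1" using a2 by simp
  have "R 1 = S (R 1) * (R 1 * R 1)" using a1 by (simp add: mult.assoc[symmetric])
  also have "\<dots> = 1" using e a1 by simp
  finally show ?thesis .
qed

lemma R_prim: assumes "x \<in> primitives s \<Delta>" shows "R x \<in> primitives s \<Delta>"
proof -
  have "\<Delta> (R x) = tsum2 s 2 (\<lambda>i. R (pa x i)) (\<lambda>i. R (pb x i))"
    using R_coalg assms prim_iff by blast
  moreover have "(\<lambda>i. R (pa x i)) = pa (R x)" "(\<lambda>i. R (pb x i)) = pb (R x)"
    by (auto simp: pa_def pb_def R_one)
  ultimately show ?thesis using prim_iff by simp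
qed

lemma RB_prim:
  assumes x: "x \<in> primitives s \<Delta>"
  shows "R x * R y = R (x * y + R x * y - y * R x)"
proof -
  define p where "p = (\<lambda>j::nat. if j = 0 then x else 1)"
  define q where "q = (\<lambda>j::nat. if j = 1 then x else 1)"
  define r where "r = (\<lambda>j::nat. if j = 2 then x else 1)"
  have dx: "\<Delta> x = tsum2 s 2 (pa x) (pb x)" using x prim_iff by auto
  have dx': "\<Delta> x = (\<lambda>f g. tens2 s x 1 f g + tens2 s 1 x f g)"
    using x unfolding primitives_def by simp
  have t3: "(\<lambda>f g k. \<Sum>i<2. ttimes21 s (\<Delta> (pa x i)) (pb x i) f g k) = tsum3 s 3 p q r"
    by (auto simp: sum2 sum3 p_def q_def r_def pa_def pb_def ttimes21_def tsum3_def tens3_def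
        D_one dx' tens2_eq algebra_simps intro!: ext)
  have "R x * R y = R (\<Sum>j<3. p j * R (q j) * y * S (R (r j)))"
    by (rule RB_id[OF dx t3])
  also have "(\<Sum>j<3. p j * R (q j) * y * S (R (r j))) = x * y + R x * y - y * R x"
    by (simp add: sum3 p_def q_def r_def R_one S_one S_prim[OF R_prim[OF x]])
  finally show ?thesis .
qed

end

theorem proposition4p7:
  fixes s :: "'k::field_char_0 \<Rightarrow> 'h::ring_1 \<Rightarrow> 'h"
    and \<Delta> :: "'h \<Rightarrow> ('k, 'h) tensor2"
    and \<epsilon> :: "'h \<Rightarrow> 'k"
    and S :: "'h \<Rightarrow> 'h"
    and F :: "nat \<Rightarrow> 'h set"
    and R :: "'h \<Rightarrow> 'h"
  assumes "filtered_rota_baxter_hopf_algebra s \<Delta> \<epsilon> S F R"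
  shows "R ` primitives s \<Delta> \<subseteq> primitives s \<Delta> \<and>
         filtered_rb_lie_algebra s (primitives s \<Delta>) (\<lambda>x y. x * y - y * x)
           (\<lambda>n. F n \<inter> primitives s \<Delta>) R"
proof -
  have rb: "rota_baxter_hopf_algebra s \<Delta> \<epsilon> S R" and fh: "filtered_hopf_algebra s \<Delta> \<epsilon> S F"
    and FR: "\<forall>n x. x \<in> F n \<longrightarrow> R x \<in> F n"
    using assms unfolding filtered_rota_baxter_hopf_algebra_def by auto
  have h: "hopf_algebra s \<Delta> \<epsilon> S" using rb unfolding rota_baxter_hopf_algebra_def by (elim conjE) assumption
  interpret rbL s \<Delta> \<epsilon> S R
    by (unfold_locales) (fact h, fact rb)
  define P where "P = primitives s \<Delta>"
  have Fsub: "\<And>n. module.subspace s (F n)" and F1: "{x. \<epsilon> x = 0} = F 1"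
    and Fdec: "\<And>n. F (Suc n) \<subseteq> F n"
    and Fmul: "\<And>i j x y. x \<in> F i \<Longrightarrow> y \<in> F j \<Longrightarrow> x * y \<in> F (i + j)"
    using fh unfolding filtered_hopf_algebra_def by auto
  have Fdiff: "\<And>n x y. x \<in> F n \<Longrightarrow> y \<in> F n \<Longrightarrow> x - y \<in> F n"
  proof -
    fix n x y assume "x \<in> F n" "y \<in> F n"
    hence "x + s (-1) y \<in> F n" using Fsub[of n] unfolding module.subspace_def[OF ms] by blast
    moreover have "s (-1) y = - y"
      using module.scale_minus_left[OF ms, of 1 y] scale_one by simp
    ultimately show "x - y \<in> F n" by simp
  qed
  have PS: "module.subspace s P" unfolding P_def by (rule prim_subspace)
  have RP: "\<And>x. x \<in> P \<Longrightarrow> R x \<in> P" unfolding P_def by (rule R_prim)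
  have BP: "\<And>x y. x \<in> P \<Longrightarrow> y \<in> P \<Longrightarrow> x * y - y * x \<in> P" unfolding P_def by (rule prim_bracket)
  have lie: "lie_algebra s P (\<lambda>x y. x * y - y * x)"
    unfolding lie_algebra_def
    using vs PS BP by (simp add: algebra_simps smult1[symmetric] smult2[symmetric]
        module.scale_right_diff_distrib[OF ms] module.scale_right_distrib[OF ms])
  have P1: "F 1 \<inter> P = P"
    using eps_prim F1 unfolding P_def by blast
  have subI: "module.subspace s (F n \<inter> P)" for n
    using Fsub[of n] PS unfolding module.subspace_def[OF ms] by blast
  have Rb: "(R x * R y - R y * R x) = R ((R x * y - y * R x) + (x * R y - R y * x) + (x * y - y * x))"
    if x: "x \<in> P" and y: "y \<in> P" for x y
  proof -
    have "R x * R y - R y * R x = R (x * y + R x * y - y * R x) - R (y * x + R y * x - x * R y)"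
      using RB_prim[of x y] RB_prim[of y x] x y unfolding P_def by simp
    also have "\<dots> = R ((R x * y - y * R x) + (x * R y - R y * x) + (x * y - y * x))"
      unfolding R_diff[symmetric] by (simp add: algebra_simps)
    finally show ?thesis .
  qed
  have part2: "filtered_rb_lie_algebra s P (\<lambda>x y. x * y - y * x) (\<lambda>n. F n \<inter> P) R"
    unfolding filtered_rb_lie_algebra_def
  proof (intro conjI allI impI ballI)
    show "lie_algebra s P (\<lambda>x y. x * y - y * x)" by (fact lie)
  next
    fix n :: nat assume "1 \<le> n"
    show "module.subspace s (F n \<inter> P)" by (rule subI)
  next
    fix n :: nat assume "1 \<le> n"
    show "F n \<inter> P \<subseteq> P" by blast
  next
    show "F 1 \<inter> P = P" by (fact P1)
  next
    fix n :: nat assume "1 \<le> n"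
    show "F (Suc n) \<inter> P \<subseteq> F n \<inter> P" using Fdec[of n] by blast
  next
    fix n m :: nat and x y assume "x \<in> F n \<inter> P" "y \<in> F m \<inter> P"
    thus "x * y - y * x \<in> F (n + m) \<inter> P"
      using Fmul[of x n y m] Fmul[of y m x n] Fdiff BP by (simp add: add.commute)
  next
    fix x assume "x \<in> P" thus "R x \<in> P" by (rule RP)
  next
    fix x y assume "x \<in> P" "y \<in> P" show "R (x + y) = R x + R y" by (rule R_add)
  next
    fix c x assume "x \<in> P" show "R (s c x) = s c (R x)" by (rule R_scale)
  next
    fix x y assume "x \<in> P" "y \<in> P"
    thus "R x * R y - R y * R x = R (R x * y - y * R x + (x * R y - R y * x) + (x * y - y * x))"
      by (rule Rb)
  next
    fix n :: nat and x assume "1 \<le> n" "x \<in> F n \<inter> P"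
    thus "R x \<in> F n \<inter> P" using FR RP by blast
  qed
  show ?thesis using part2 RP unfolding P_def by blast
qed

end
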